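(* Let $M\ge1$, $\ell\ge1$, $1\le m\le\ell$, and let $\lambda_1,\dots,\lambda_m$ be positive integers with $\lambda_1+\dots+\lambda_m=\ell$. For $k=(k_1,\dots,k_\ell)\in\mathbb{Z}^\ell$ define the block sums $K_j=\sum_{l=\lambda_1+\dots+\lambda_{j-1}+1}^{\lambda_1+\dots+\lambda_j}k_l$ for $j=1,\dots,m$. Let $\epsilon_1,\dots,\epsilon_m\in\{\pm1\}$ with $\prod_{j=1}^m\epsilon_j=-1$. Let $\mathcal N_{\mathrm{odd}}$ be the number of $(n_1,\dots,n_m)\in\mathbb{Z}^m$ with each $n_j$ odd, $-(2M-1)\le n_j\le 2M-1$, and $\tfrac12 n_j-\epsilon_{j-1}\tfrac12 n_{j-1}=-K_j$ for $j=1,\dots,m$, where indices are taken cyclically modulo $m$ (so $n_0=n_m$, $\epsilon_0=\epsilon_m$). Then $\mathcal N_{\mathrm{odd}}\in\{0,1\}$. Moreover, if $\sum_{l=1}^\ell k_l$ is even then $\mathcal N_{\mathrm{odd}}=0$, and if $\sum_{l=1}^\ell k_l$ is odd and $\sum_{l=1}^\ell|k_l|\le 2M-1$ then $\mathcal N_{\mathrm{odd}}=1$. *)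

theory Defs
  imports Complex_Main
begin

definition lam_psum :: "(nat \<Rightarrow> nat) \<Rightarrow> nat \<Rightarrow> nat" where
  "lam_psum lam j = (\<Sum>i\<in>{1..j}. lam i)"

definition block_sum :: "(nat \<Rightarrow> nat) \<Rightarrow> (nat \<Rightarrow> int) \<Rightarrow> nat \<Rightarrow> int" where
  "block_sum lam k j = (\<Sum>l\<in>{lam_psum lam (j - 1) + 1 .. lam_psum lam j}. k l)"

definition cyc_prev :: "nat \<Rightarrow> nat \<Rightarrow> nat" where
  "cyc_prev m j = (if j = 1 then m else j - 1)"

definition odd_solutions ::
  "nat \<Rightarrow> nat \<Rightarrow> (nat \<Rightarrow> nat) \<Rightarrow> (nat \<Rightarrow> int) \<Rightarrow> (nat \<Rightarrow> int) \<Rightarrow> (nat \<Rightarrow> int) set" where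
  "odd_solutions M m lam k eps =
     {n. (\<forall>j. j \<notin> {1..m} \<longrightarrow> n j = 0) \<and>
         (\<forall>j\<in>{1..m}. odd (n j) \<and> - (2 * int M - 1) \<le> n j \<and> n j \<le> 2 * int M - 1 \<and>
            (1/2) * real_of_int (n j) - real_of_int (eps (cyc_prev m j)) * (1/2) * real_of_int (n (cyc_prev m j))
              = - real_of_int (block_sum lam k j))}"

definition N_odd :: "nat \<Rightarrow> nat \<Rightarrow> (nat \<Rightarrow> nat) \<Rightarrow> (nat \<Rightarrow> int) \<Rightarrow> (nat \<Rightarrow> int) \<Rightarrow> nat" where
  "N_odd M m lam k eps = card (odd_solutions M m lam k eps)"

end

theory Submission
  imports Defs
begin

lemma eq_conv:
  "((1/2) * real_of_int a - real_of_int e * (1/2) * real_of_int b = - real_of_int c)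
   \<longleftrightarrow> a - e * b = -2 * c"
proof -
  have "((1/2) * real_of_int a - real_of_int e * (1/2) * real_of_int b = - real_of_int c)
     \<longleftrightarrow> real_of_int (a - e * b) = real_of_int (-2 * c)"
    by (simp add: field_simps)
  also have "\<dots> \<longleftrightarrow> a - e * b = -2 * c" by (rule of_int_eq_iff)
  finally show ?thesis .
qed

definition tau :: "(nat \<Rightarrow> int) \<Rightarrow> nat \<Rightarrow> int" where
  "tau eps j = (\<Prod>i\<in>{1..j}. eps i)"

definition Yf :: "nat \<Rightarrow> (nat \<Rightarrow> int) \<Rightarrow> (nat \<Rightarrow> int) \<Rightarrow> nat \<Rightarrow> int" where
  "Yf m eps K j = - K 1 - (\<Sum>i\<in>{2..j}. tau eps (i - 1) * K i)
       + (\<Sum>i\<in>{j+1..m}. tau eps (i - 1) * K i)"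

lemma tau_0[simp]: "tau eps 0 = 1" by (simp add: tau_def)

lemma tau_Suc: "tau eps (Suc j) = tau eps j * eps (Suc j)"
  by (simp add: tau_def prod.cl_ivl_Suc)

lemma tau_pm:
  assumes "\<forall>j\<in>{1..m}. eps j = 1 \<or> eps j = -1" "j \<le> m"
  shows "tau eps j = 1 \<or> tau eps j = -1"
  using assms(2)
proof (induction j)
  case 0 then show ?case by simp
next
  case (Suc j)
  then have "eps (Suc j) = 1 \<or> eps (Suc j) = -1" using assms(1) by auto
  with Suc show ?case by (auto simp: tau_Suc)
qed

lemma tau_sq:
  assumes "\<forall>j\<in>{1..m}. eps j = 1 \<or> eps j = -1" "j \<le> m"
  shows "tau eps j * tau eps j = 1"
  using tau_pm[OF assms] by auto

lemma block_decomp: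
  "(\<Sum>j\<in>{1..m}. block_sum lam f j) = (\<Sum>l\<in>{1..lam_psum lam m}. f l)"
proof (induction m)
  case 0 then show ?case by (simp add: lam_psum_def)
next
  case (Suc m)
  have ps: "lam_psum lam (Suc m) = lam_psum lam m + lam (Suc m)"
    by (simp add: lam_psum_def sum.cl_ivl_Suc)
  have "(\<Sum>l\<in>{1..lam_psum lam (Suc m)}. f l) =
        (\<Sum>l\<in>{1..lam_psum lam m}. f l) + (\<Sum>l\<in>{lam_psum lam m + 1..lam_psum lam (Suc m)}. f l)"
    unfolding ps by (rule sum.ub_add_nat) simp
  then show ?case using Suc by (simp add: sum.cl_ivl_Suc block_sum_def)
qed


lemma sol_aux:
  assumes pm: "\<forall>j\<in>{1..m}. eps j = 1 \<or> eps j = -1"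
    and eq: "\<forall>j\<in>{1..m}. n j - eps (cyc_prev m j) * n (cyc_prev m j) = -2 * K j"
  shows "1 \<le> j \<Longrightarrow> j \<le> m \<Longrightarrow>
     n j = tau eps (j - 1) * (n 1 - 2 * (\<Sum>i\<in>{2..j}. tau eps (i - 1) * K i))"
proof (induction j)
  case 0 then show ?case by simp
next
  case (Suc j)
  show ?case
  proof (cases "j = 0")
    case True then show ?thesis by simp
  next
    case False
    then have j1: "1 \<le> j" and jm: "j \<le> m" using Suc by auto
    have cp: "cyc_prev m (Suc j) = j" using False by (simp add: cyc_prev_def)
    have e: "n (Suc j) = eps j * n j - 2 * K (Suc j)"
      using eq Suc.prems cp by force
    have t: "tau eps j = tau eps (j - 1) * eps j"
      using tau_Suc[of eps "j - 1"] j1 by simp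
    have sq: "tau eps j * tau eps j = 1" using tau_sq[OF pm jm] .
    have S: "(\<Sum>i\<in>{2..Suc j}. tau eps (i - 1) * K i)
        = (\<Sum>i\<in>{2..j}. tau eps (i - 1) * K i) + tau eps j * K (Suc j)"
      using j1 by (simp add: sum.cl_ivl_Suc)
    have IH: "n j = tau eps (j - 1) * (n 1 - 2 * (\<Sum>i\<in>{2..j}. tau eps (i - 1) * K i))"
      using Suc.IH j1 jm by simp
    define T where "T = (\<Sum>i\<in>{2..j}. tau eps (i - 1) * K i)"
    have "tau eps j * (n 1 - 2 * (T + tau eps j * K (Suc j)))
        = tau eps j * (n 1 - 2 * T) - 2 * (tau eps j * tau eps j) * K (Suc j)"
      by (simp add: algebra_simps)
    also have "\<dots> = eps j * (tau eps (j - 1) * (n 1 - 2 * T)) - 2 * K (Suc j)"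
      by (simp only: sq) (simp add: t algebra_simps)
    finally show ?thesis
      unfolding S e IH T_def[symmetric] by simp
  qed
qed


lemma sol_form:
  assumes m1: "1 \<le> m"
    and pm: "\<forall>j\<in>{1..m}. eps j = 1 \<or> eps j = -1"
    and pr: "(\<Prod>j\<in>{1..m}. eps j) = -1"
    and eq: "\<forall>j\<in>{1..m}. n j - eps (cyc_prev m j) * n (cyc_prev m j) = -2 * K j"
    and j: "j \<in> {1..m}"
  shows "n j = tau eps (j - 1) * Yf m eps K j"
proof -
  define A where "A = (\<Sum>i\<in>{2..m}. tau eps (i - 1) * K i)"
  have nm: "n m = tau eps (m - 1) * (n 1 - 2 * A)"
    using sol_aux[OF pm eq, of m] m1 A_def by simp
  have e1: "n 1 - eps m * n m = -2 * K 1"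
    using eq m1 by (force simp: cyc_prev_def)
  have tm: "eps m * tau eps (m - 1) = -1"
    using tau_Suc[of eps "m - 1"] m1 pr by (simp add: tau_def mult.commute)
  have "eps m * n m = - (n 1 - 2 * A)"
    unfolding nm using tm by (metis mult.assoc mult_minus1)
  then have n1: "n 1 = A - K 1" using e1 by simp
  have split: "A = (\<Sum>i\<in>{2..j}. tau eps (i - 1) * K i) + (\<Sum>i\<in>{j+1..m}. tau eps (i - 1) * K i)"
    using sum.ub_add_nat[of 2 j "\<lambda>i. tau eps (i - 1) * K i" "m - j"] j unfolding A_def by simp
  have "n j = tau eps (j - 1) * (n 1 - 2 * (\<Sum>i\<in>{2..j}. tau eps (i - 1) * K i))"
    using sol_aux[OF pm eq, of j] j by simp
  then show ?thesis unfolding Yf_def n1 split by simp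
qed


lemma Y_props:
  assumes m1: "1 \<le> m"
    and pm: "\<forall>j\<in>{1..m}. eps j = 1 \<or> eps j = -1"
    and j: "j \<in> {1..m}"
  shows "even (Yf m eps K j + (\<Sum>i\<in>{1..m}. K i))"
    and "\<bar>Yf m eps K j\<bar> \<le> (\<Sum>i\<in>{1..m}. \<bar>K i\<bar>)"
proof -
  have tpm: "tau eps (i - 1) = 1 \<or> tau eps (i - 1) = -1" if "i \<in> {1..m}" for i
    using tau_pm[OF pm, of "i - 1"] that by auto
  have spl: "(\<Sum>i\<in>{1..m}. f i) = f 1 + (\<Sum>i\<in>{2..j}. f i) + (\<Sum>i\<in>{j+1..m}. f i)" for f :: "nat \<Rightarrow> int"
  proof -
    have "(\<Sum>i\<in>{1..m}. f i) = f 1 + (\<Sum>i\<in>{2..m}. f i)"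
      using m1 by (simp add: sum.atLeast_Suc_atMost numeral_2_eq_2)
    also have "(\<Sum>i\<in>{2..m}. f i) = (\<Sum>i\<in>{2..j}. f i) + (\<Sum>i\<in>{j+1..m}. f i)"
      using sum.ub_add_nat[of 2 j f "m - j"] j by simp
    finally show ?thesis by simp
  qed
  have e: "Yf m eps K j + (\<Sum>i\<in>{1..m}. K i) =
     (\<Sum>i\<in>{2..j}. K i - tau eps (i - 1) * K i) + (\<Sum>i\<in>{j+1..m}. K i + tau eps (i - 1) * K i)"
    unfolding Yf_def spl[of K] by (simp add: sum.distrib sum_subtractf)
  have ev1: "even (\<Sum>i\<in>{2..j}. K i - tau eps (i - 1) * K i)"
  proof (rule dvd_sum)
    fix i assume "i \<in> {2..j}"
    then have "i \<in> {1..m}" using j by auto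
    then show "2 dvd (K i - tau eps (i - 1) * K i)" using tpm by fastforce
  qed
  have ev2: "even (\<Sum>i\<in>{j+1..m}. K i + tau eps (i - 1) * K i)"
  proof (rule dvd_sum)
    fix i assume "i \<in> {j+1..m}"
    then have "i \<in> {1..m}" using j by auto
    then show "2 dvd (K i + tau eps (i - 1) * K i)" using tpm by fastforce
  qed
  show "even (Yf m eps K j + (\<Sum>i\<in>{1..m}. K i))" unfolding e using ev1 ev2 by simp
  have ab: "\<bar>tau eps (i - 1) * K i\<bar> = \<bar>K i\<bar>" if "i \<in> {1..m}" for i
    using tpm[OF that] by (auto simp: abs_mult)
  have b1: "\<bar>\<Sum>i\<in>{2..j}. tau eps (i - 1) * K i\<bar> \<le> (\<Sum>i\<in>{2..j}. \<bar>K i\<bar>)"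
  proof -
    have "\<bar>\<Sum>i\<in>{2..j}. tau eps (i - 1) * K i\<bar> \<le> (\<Sum>i\<in>{2..j}. \<bar>tau eps (i - 1) * K i\<bar>)"
      by (rule sum_abs)
    also have "\<dots> = (\<Sum>i\<in>{2..j}. \<bar>K i\<bar>)"
      by (rule sum.cong) (use j ab in auto)
    finally show ?thesis .
  qed
  have b2: "\<bar>\<Sum>i\<in>{j+1..m}. tau eps (i - 1) * K i\<bar> \<le> (\<Sum>i\<in>{j+1..m}. \<bar>K i\<bar>)"
  proof -
    have "\<bar>\<Sum>i\<in>{j+1..m}. tau eps (i - 1) * K i\<bar> \<le> (\<Sum>i\<in>{j+1..m}. \<bar>tau eps (i - 1) * K i\<bar>)"
      by (rule sum_abs)
    also have "\<dots> = (\<Sum>i\<in>{j+1..m}. \<bar>K i\<bar>)"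
      by (rule sum.cong) (use j ab in auto)
    finally show ?thesis .
  qed
  show "\<bar>Yf m eps K j\<bar> \<le> (\<Sum>i\<in>{1..m}. \<bar>K i\<bar>)"
    unfolding Yf_def spl[of "\<lambda>i. \<bar>K i\<bar>"] using b1 b2 by linarith
qed

lemma Y_eq:
  assumes m1: "1 \<le> m"
    and pm: "\<forall>j\<in>{1..m}. eps j = 1 \<or> eps j = -1"
    and pr: "(\<Prod>j\<in>{1..m}. eps j) = -1"
    and j: "j \<in> {1..m}"
  shows "tau eps (j - 1) * Yf m eps K j
     - eps (cyc_prev m j) * (tau eps (cyc_prev m j - 1) * Yf m eps K (cyc_prev m j)) = -2 * K j"
proof (cases "j = 1")
  case True
  have tm: "eps m * tau eps (m - 1) = -1"
    using tau_Suc[of eps "m - 1"] m1 pr by (simp add: tau_def mult.commute)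
  have "eps m * (tau eps (m - 1) * Yf m eps K m) = - Yf m eps K m"
    using tm by (metis mult.assoc mult_minus1)
  then show ?thesis using True by (simp add: cyc_prev_def Yf_def numeral_2_eq_2)
next
  case False
  then obtain i where i: "j = Suc i" "1 \<le> i" "i < m" using j by (cases j) auto
  have cp: "cyc_prev m j = i" using i by (simp add: cyc_prev_def)
  have t: "tau eps i = tau eps (i - 1) * eps i"
    using tau_Suc[of eps "i - 1"] i by simp
  have sq: "tau eps i * tau eps i = 1" using tau_sq[OF pm, of i] i by simp
  have s1: "(\<Sum>l\<in>{2..Suc i}. tau eps (l - 1) * K l) = (\<Sum>l\<in>{2..i}. tau eps (l - 1) * K l) + tau eps i * K (Suc i)"
    using i by (simp add: sum.cl_ivl_Suc)
  have s2: "(\<Sum>l\<in>{i+1..m}. tau eps (l - 1) * K l) = tau eps i * K (Suc i) + (\<Sum>l\<in>{Suc i+1..m}. tau eps (l - 1) * K l)"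
    using i by (simp add: sum.atLeast_Suc_atMost)
  have d: "Yf m eps K (Suc i) = Yf m eps K i - 2 * tau eps i * K (Suc i)"
    unfolding Yf_def s1 s2 by simp
  have "tau eps i * Yf m eps K (Suc i) - eps i * (tau eps (i - 1) * Yf m eps K i)
     = tau eps i * Yf m eps K (Suc i) - tau eps i * Yf m eps K i"
    by (simp add: t algebra_simps)
  also have "\<dots> = - 2 * (tau eps i * tau eps i) * K (Suc i)"
    unfolding d by (simp add: algebra_simps)
  also have "\<dots> = -2 * K (Suc i)" by (simp only: sq)
  finally show ?thesis using i cp by simp
qed


lemma cyc_prev_in: "1 \<le> m \<Longrightarrow> j \<in> {1..m} \<Longrightarrow> cyc_prev m j \<in> {1..m}"
  by (auto simp: cyc_prev_def)

theorem lemma7: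
  fixes M L m :: nat and lam :: "nat \<Rightarrow> nat" and k :: "nat \<Rightarrow> int" and eps :: "nat \<Rightarrow> int"
  assumes "M \<ge> 1" and "L \<ge> 1" and "1 \<le> m" and "m \<le> L"
    and "\<forall>j\<in>{1..m}. lam j > 0"
    and "(\<Sum>j\<in>{1..m}. lam j) = L"
    and "\<forall>j\<in>{1..m}. eps j = 1 \<or> eps j = -1"
    and "(\<Prod>j\<in>{1..m}. eps j) = -1"
  shows "N_odd M m lam k eps \<in> {0, 1}
    \<and> (even (\<Sum>l\<in>{1..L}. k l) \<longrightarrow> N_odd M m lam k eps = 0)
    \<and> (odd (\<Sum>l\<in>{1..L}. k l) \<and> (\<Sum>l\<in>{1..L}. \<bar>k l\<bar>) \<le> 2 * int M - 1
         \<longrightarrow> N_odd M m lam k eps = 1)"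
proof -
  note m1 = assms(3) and pm = assms(7) and pr = assms(8)
  define K where "K = block_sum lam k"
  define S where "S = odd_solutions M m lam k eps"
  define n0 where "n0 j = (if j \<in> {1..m} then tau eps (j - 1) * Yf m eps K j else 0)" for j
  have memS: "n \<in> S \<longleftrightarrow> (\<forall>j. j \<notin> {1..m} \<longrightarrow> n j = 0) \<and>
      (\<forall>j\<in>{1..m}. odd (n j) \<and> - (2 * int M - 1) \<le> n j \<and> n j \<le> 2 * int M - 1 \<and>
         n j - eps (cyc_prev m j) * n (cyc_prev m j) = -2 * K j)" for n
    unfolding S_def odd_solutions_def K_def eq_conv by simp
  have psL: "lam_psum lam m = L" using assms(6) by (simp add: lam_psum_def)
  have sumK: "(\<Sum>l\<in>{1..L}. k l) = (\<Sum>j\<in>{1..m}. K j)"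
    using block_decomp[of lam k m] psL K_def by simp
  have sub: "S \<subseteq> {n0}"
  proof
    fix n assume "n \<in> S"
    then have z: "\<forall>j. j \<notin> {1..m} \<longrightarrow> n j = 0"
      and eq: "\<forall>j\<in>{1..m}. n j - eps (cyc_prev m j) * n (cyc_prev m j) = -2 * K j"
      using memS by auto
    have "n = n0"
    proof
      fix j show "n j = n0 j"
        using z sol_form[OF m1 pm pr eq, of j] by (auto simp: n0_def)
    qed
    then show "n \<in> {n0}" by simp
  qed
  have c01: "card S \<in> {0, 1}"
  proof -
    have "card S \<le> card {n0}" by (rule card_mono) (use sub in auto)
    then show ?thesis by auto
  qed
  have P2: "even (\<Sum>l\<in>{1..L}. k l) \<longrightarrow> card S = 0"
  proof
    assume ev: "even (\<Sum>l\<in>{1..L}. k l)"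
    have "S = {}"
    proof (rule ccontr)
      assume "S \<noteq> {}"
      then obtain n where n: "n \<in> S" by auto
      have 1: "(1::nat) \<in> {1..m}" using m1 by simp
      have "odd (n 1)" using n memS 1 by blast
      moreover have "n 1 = n0 1" using sub n by auto
      ultimately have "odd (Yf m eps K 1)" using 1 by (simp add: n0_def)
      moreover have "even (Yf m eps K 1 + (\<Sum>i\<in>{1..m}. K i))" using Y_props(1)[OF m1 pm 1] .
      ultimately show False using ev sumK by simp
    qed
    then show "card S = 0" by simp
  qed
  have P3: "odd (\<Sum>l\<in>{1..L}. k l) \<and> (\<Sum>l\<in>{1..L}. \<bar>k l\<bar>) \<le> 2 * int M - 1 \<longrightarrow> card S = 1"
  proof
    assume h: "odd (\<Sum>l\<in>{1..L}. k l) \<and> (\<Sum>l\<in>{1..L}. \<bar>k l\<bar>) \<le> 2 * int M - 1"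
    have bK: "(\<Sum>j\<in>{1..m}. \<bar>K j\<bar>) \<le> (\<Sum>l\<in>{1..L}. \<bar>k l\<bar>)"
    proof -
      have "(\<Sum>j\<in>{1..m}. \<bar>K j\<bar>) \<le> (\<Sum>j\<in>{1..m}. block_sum lam (\<lambda>l. \<bar>k l\<bar>) j)"
        by (rule sum_mono) (simp add: K_def block_sum_def sum_abs)
      also have "\<dots> = (\<Sum>l\<in>{1..L}. \<bar>k l\<bar>)" using block_decomp[of lam "\<lambda>l. \<bar>k l\<bar>" m] psL by simp
      finally show ?thesis .
    qed
    have "n0 \<in> S"
      unfolding memS
    proof (intro conjI allI impI ballI)
      fix j :: nat
      assume "j \<notin> {1..m}" then show "n0 j = 0" unfolding n0_def by auto
    next
      fix j assume j: "j \<in> {1..m}"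
      have tpm: "tau eps (j - 1) = 1 \<or> tau eps (j - 1) = -1"
        using tau_pm[OF pm, of "j - 1"] j by auto
      have oY: "odd (Yf m eps K j)" using Y_props(1)[OF m1 pm j] h sumK by simp
      have aY: "\<bar>Yf m eps K j\<bar> \<le> 2 * int M - 1" using Y_props(2)[OF m1 pm j, of K] bK h by linarith
      have n0j: "n0 j = tau eps (j - 1) * Yf m eps K j" using j by (simp add: n0_def)
      show "odd (n0 j)" using n0j tpm oY by auto
      show "- (2 * int M - 1) \<le> n0 j" using n0j tpm aY by auto
      show "n0 j \<le> 2 * int M - 1" using n0j tpm aY by auto
      show "n0 j - eps (cyc_prev m j) * n0 (cyc_prev m j) = -2 * K j"
        using Y_eq[OF m1 pm pr j, of K] n0j cyc_prev_in[OF m1 j] by (simp add: n0_def)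
    qed
    then have "S = {n0}" using sub by auto
    then show "card S = 1" by simp
  qed
  show ?thesis using c01 P2 P3 unfolding N_odd_def S_def[symmetric] by blast
qed

end
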